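(* Let $D_V=\mathbb{C}[w_0,\dots,w_s]\langle\partial_{w_0},\dots,\partial_{w_s}\rangle$ and let $I\subset D_V$ be a left ideal that can be generated by finitely many elements of pure order. Put $M=D_V/I$. Then for all $k\in\mathbb{Z}$ and $p$, the natural map $$V^kD_V\cap F_pD_V\longrightarrow V^k_{ind}M\cap F^{ord}_pM$$ is surjective.
   Context: $F_\bullet D_V$ is the order filtration. $V^\bullet D_V$ is the $V$-filtration along $w_0=0$: $V^0D_V$ is spanned by the monomials $w^\gamma\partial_w^\delta$ with $\gamma_0\geq\delta_0$, $V^kD_V=w_0^kV^0D_V$ and $V^{-k}D_V=\sum_{j\ge0,\,j\le k}\partial_{w_0}^jV^0D_V$ for $k>0$ (so $V^kD_V$ is spanned by monomials with $\gamma_0-\delta_0\ge k$). $V^k_{ind}M=(V^kD_V+I)/I$, $F^{ord}_pM=(F_pD_V+I)/I$. An element $P=\sum c_{\gamma\delta}w^\gamma\partial_w^\delta$ (standard form) is of pure order $k$ if every monomial with $c_{\gamma\delta}\ne0$ lies in $V^kD_V$ and has nonzero class in $V^kD_V/V^{k+1}D_V$, i.e. $\gamma_0-\delta_0=k$ for all its monomials. *)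

theory Defs
  imports Complex_Main
begin

text \<open>The Weyl algebra D_V = C[w_0..w_s]<d_0..d_s>, elements written in standard
form sum c_{gamma,delta} w^gamma d^delta.\<close>

type_synonym mono = "(nat \<Rightarrow> nat) \<times> (nat \<Rightarrow> nat)"
type_synonym weyl = "mono \<Rightarrow> complex"

definition wsupp :: "weyl \<Rightarrow> mono set" where
  "wsupp P = {m. P m \<noteq> 0}"

definition Dv :: "nat \<Rightarrow> weyl set" where
  "Dv s = {P. finite (wsupp P) \<and>
              (\<forall>g d. P (g, d) \<noteq> 0 \<longrightarrow> (\<forall>i>s. g i = 0 \<and> d i = 0))}"

text \<open>Normal-ordering rule:
 (w^a d^b)(w^c d^e) = sum_{k <= b, k <= c} prod_i C(b_i,k_i) c_i!/(c_i-k_i)! w^(a+c-k) d^(b+e-k).\<close>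

definition wmult :: "nat \<Rightarrow> weyl \<Rightarrow> weyl \<Rightarrow> weyl" where
  "wmult s P Q = (\<lambda>(x, y).
     \<Sum>(a, b)\<in>wsupp P. \<Sum>(c, e)\<in>wsupp Q.
       \<Sum>k\<in>{k. \<forall>i. k i \<le> min (b i) (c i)}.
         (if x = (\<lambda>i. a i + c i - k i) \<and> y = (\<lambda>i. b i + e i - k i)
          then P (a, b) * Q (c, e) *
               of_nat (\<Prod>i\<le>s. (b i choose k i) * (fact (c i) div fact (c i - k i)))
          else 0))"

definition left_ideal :: "nat \<Rightarrow> weyl set \<Rightarrow> weyl set" where
  "left_ideal s G = {P. \<exists>Q. (\<forall>g\<in>G. Q g \<in> Dv s) \<and>
                          P = (\<lambda>m. \<Sum>g\<in>G. wmult s (Q g) g m)}"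

definition Vfilt :: "nat \<Rightarrow> int \<Rightarrow> weyl set" where
  "Vfilt s k = {P \<in> Dv s. \<forall>g d. P (g, d) \<noteq> 0 \<longrightarrow> int (g 0) - int (d 0) \<ge> k}"

definition Ffilt :: "nat \<Rightarrow> int \<Rightarrow> weyl set" where
  "Ffilt s p = {P \<in> Dv s. \<forall>g d. P (g, d) \<noteq> 0 \<longrightarrow> int (\<Sum>i\<le>s. d i) \<le> p}"

definition pure_order :: "weyl \<Rightarrow> int \<Rightarrow> bool" where
  "pure_order P k \<longleftrightarrow> (\<forall>g d. P (g, d) \<noteq> 0 \<longrightarrow> int (g 0) - int (d 0) = k)"

definition mclass :: "nat \<Rightarrow> weyl set \<Rightarrow> weyl \<Rightarrow> weyl set" where
  "mclass s I A = {B \<in> Dv s. B - A \<in> I}"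

definition Vind :: "nat \<Rightarrow> weyl set \<Rightarrow> int \<Rightarrow> weyl set set" where
  "Vind s I k = mclass s I ` Vfilt s k"

definition Ford :: "nat \<Rightarrow> weyl set \<Rightarrow> int \<Rightarrow> weyl set set" where
  "Ford s I p = mclass s I ` Ffilt s p"

end

theory Submission
  imports Defs
begin

definition grd :: "mono \<Rightarrow> int" where "grd m = int (fst m 0) - int (snd m 0)"
definition trunc :: "int \<Rightarrow> weyl \<Rightarrow> weyl" where
  "trunc k P = (\<lambda>m. if grd m \<ge> k then P m else 0)"

definition wm :: "nat \<Rightarrow> mono set \<Rightarrow> weyl \<Rightarrow> weyl \<Rightarrow> weyl" where
  "wm s S P Q = (\<lambda>(x, y).
     \<Sum>(a, b)\<in>S. \<Sum>(c, e)\<in>wsupp Q.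
       \<Sum>k\<in>{k. \<forall>i. k i \<le> min (b i) (c i)}.
         (if x = (\<lambda>i. a i + c i - k i) \<and> y = (\<lambda>i. b i + e i - k i)
          then P (a, b) * Q (c, e) *
               of_nat (\<Prod>i\<le>s. (b i choose k i) * (fact (c i) div fact (c i - k i)))
          else 0))"

lemma wmult_wm: "wmult s P Q = wm s (wsupp P) P Q"
  by (simp add: wmult_def wm_def)

lemma wm_mono:
  assumes "finite S" "wsupp P \<subseteq> S"
  shows "wm s S P Q = wm s (wsupp P) P Q"
proof (rule ext, clarsimp simp: wm_def)
  fix x y
  show "(\<Sum>(a, b)\<in>S. \<Sum>(c, e)\<in>wsupp Q.
       \<Sum>k\<in>{k. \<forall>i. k i \<le> b i \<and> k i \<le> c i}.
         (if x = (\<lambda>i. a i + c i - k i) \<and> y = (\<lambda>i. b i + e i - k i)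
          then P (a, b) * Q (c, e) *
               of_nat (\<Prod>i\<le>s. (b i choose k i) * (fact (c i) div fact (c i - k i)))
          else 0)) =
    (\<Sum>(a, b)\<in>wsupp P. \<Sum>(c, e)\<in>wsupp Q.
       \<Sum>k\<in>{k. \<forall>i. k i \<le> b i \<and> k i \<le> c i}.
         (if x = (\<lambda>i. a i + c i - k i) \<and> y = (\<lambda>i. b i + e i - k i)
          then P (a, b) * Q (c, e) *
               of_nat (\<Prod>i\<le>s. (b i choose k i) * (fact (c i) div fact (c i - k i)))
          else 0))"
    apply (rule sum.mono_neutral_right)
    using assms apply simp
    using assms apply simp
    apply (rule ballI)
    apply (case_tac i)
    apply (simp add: wsupp_def)
    apply (elim conjE)
    apply (simp add: split_def)
    apply (intro sum.neutral ballI)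
    apply simp
    done
qed

lemma wmult_diff:
  assumes "finite (wsupp P1)" "finite (wsupp P2)"
  shows "wmult s (P1 - P2) Q = wmult s P1 Q - wmult s P2 Q"
proof -
  let ?S = "wsupp P1 \<union> wsupp P2"
  have f: "finite ?S" using assms by auto
  have "wsupp (P1 - P2) \<subseteq> ?S" by (auto simp: wsupp_def)
  then have e1: "wmult s (P1 - P2) Q = wm s ?S (P1 - P2) Q"
    using wm_mono[OF f] wmult_wm by metis
  have e2: "wmult s P1 Q = wm s ?S P1 Q"
    using wm_mono[OF f, of P1] wmult_wm by auto
  have e3: "wmult s P2 Q = wm s ?S P2 Q"
    using wm_mono[OF f, of P2] wmult_wm by auto
  show ?thesis unfolding e1 e2 e3
    unfolding wm_def
    apply (rule ext)
    apply (simp add: split_def sum_subtractf[symmetric])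
    apply (intro sum.cong refl)
    apply (auto simp: algebra_simps)
    done
qed

lemma Dv_fin: "P \<in> Dv s \<Longrightarrow> finite (wsupp P)"
  by (simp add: Dv_def)

lemma Dv_diff: "P \<in> Dv s \<Longrightarrow> Q \<in> Dv s \<Longrightarrow> P - Q \<in> Dv s"
proof -
  assume a: "P \<in> Dv s" "Q \<in> Dv s"
  have "wsupp (P - Q) \<subseteq> wsupp P \<union> wsupp Q" by (auto simp: wsupp_def)
  then have "finite (wsupp (P - Q))" using a by (auto simp: Dv_def intro: finite_subset)
  moreover have "\<forall>g d. (P - Q) (g, d) \<noteq> 0 \<longrightarrow> (\<forall>i>s. g i = 0 \<and> d i = 0)"
  proof (intro allI impI)
    fix g d i assume "(P - Q) (g, d) \<noteq> 0" "s < i"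
    then have "P (g,d) \<noteq> 0 \<or> Q (g,d) \<noteq> 0" by auto
    then show "g i = 0 \<and> d i = 0" using a \<open>s < i\<close> unfolding Dv_def by blast
  qed
  ultimately show ?thesis by (simp add: Dv_def)
qed

lemma zero_Dv: "(\<lambda>_. 0::complex) \<in> Dv s"
  by (simp add: Dv_def wsupp_def)

lemma wmult_zero: "wmult s (\<lambda>_. 0) Q = (\<lambda>_. 0)"
  by (rule ext) (simp add: wmult_def wsupp_def split_def)

lemma zero_I: "(\<lambda>_. 0::complex) \<in> left_ideal s G"
  unfolding left_ideal_def
  apply (rule CollectI, rule exI[where x="\<lambda>_ _. 0::complex"])
  by (simp add: zero_Dv wmult_zero)

lemma I_diff:
  assumes "x \<in> left_ideal s G" "y \<in> left_ideal s G"
  shows "x - y \<in> left_ideal s G"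
proof -
  obtain Q1 where q1: "\<forall>g\<in>G. Q1 g \<in> Dv s" "x = (\<lambda>m. \<Sum>g\<in>G. wmult s (Q1 g) g m)"
    using assms(1) unfolding left_ideal_def by blast
  obtain Q2 where q2: "\<forall>g\<in>G. Q2 g \<in> Dv s" "y = (\<lambda>m. \<Sum>g\<in>G. wmult s (Q2 g) g m)"
    using assms(2) unfolding left_ideal_def by blast
  have pw: "\<And>g m. g \<in> G \<Longrightarrow> wmult s (Q1 g) g m - wmult s (Q2 g) g m = wmult s (Q1 g - Q2 g) g m"
  proof -
    fix g m assume "g \<in> G"
    then have "finite (wsupp (Q1 g))" "finite (wsupp (Q2 g))" using Dv_fin q1(1) q2(1) by auto
    from wmult_diff[OF this, of s g] show "wmult s (Q1 g) g m - wmult s (Q2 g) g m = wmult s (Q1 g - Q2 g) g m"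
      by simp
  qed
  have "x - y = (\<lambda>m. \<Sum>g\<in>G. wmult s (Q1 g - Q2 g) g m)"
    unfolding q1(2) q2(2)
    apply (rule ext)
    apply (simp add: sum_subtractf[symmetric])
    apply (rule sum.cong[OF refl])
    using pw by simp
  moreover have "\<forall>g\<in>G. Q1 g - Q2 g \<in> Dv s" using q1 q2 Dv_diff by blast
  ultimately show ?thesis unfolding left_ideal_def
    by (intro CollectI exI[where x="\<lambda>g. Q1 g - Q2 g"]) simp
qed

lemma trunc_Dv: "P \<in> Dv s \<Longrightarrow> trunc k P \<in> Dv s"
proof -
  assume a: "P \<in> Dv s"
  have "wsupp (trunc k P) \<subseteq> wsupp P" by (auto simp: wsupp_def trunc_def)
  then have "finite (wsupp (trunc k P))" using a by (auto simp: Dv_def intro: finite_subset)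
  then show ?thesis using a by (auto simp: Dv_def trunc_def split: if_splits)
qed

lemma grd_prod:
  assumes "\<forall>i. kk i \<le> b i \<and> kk i \<le> c i" "int (c 0) - int (e 0) = j"
  shows "grd (\<lambda>i. a i + c i - kk i, \<lambda>i. b i + e i - kk i) = grd (a, b) + j"
proof -
  have "kk 0 \<le> b 0" "kk 0 \<le> c 0" using assms(1) by auto
  then show ?thesis using assms(2) by (simp add: grd_def)
qed

lemma trunc_wmult:
  assumes fin: "finite (wsupp Q)" and po: "pure_order g j"
  shows "trunc k (wmult s Q g) = wmult s (trunc (k - j) Q) g"
proof -
  have "wsupp (trunc (k - j) Q) \<subseteq> wsupp Q" by (auto simp: wsupp_def trunc_def)
  then have r: "wmult s (trunc (k - j) Q) g = wm s (wsupp Q) (trunc (k - j) Q) g"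
    using wm_mono[OF fin] wmult_wm by metis
  show ?thesis unfolding r
  proof (rule ext)
    fix m :: mono
    obtain x y where m: "m = (x, y)" by fastforce
    show "trunc k (wmult s Q g) m = wm s (wsupp Q) (trunc (k - j) Q) g m"
    proof (cases "grd (x, y) \<ge> k")
      case True
      then show ?thesis unfolding m trunc_def wmult_wm wm_def
        apply (simp add: split_def)
        apply (intro sum.cong refl)
        apply clarsimp
        subgoal for a b c e kk
          using grd_prod[of kk b c e j a] po
          by (cases "g (c, e) = 0") (auto simp: pure_order_def trunc_def)
        done
    next
      case False
      then show ?thesis unfolding m trunc_def wmult_wm wm_def
        apply (simp add: split_def)
        apply (intro sum.neutral ballI)
        apply clarsimp
        subgoal for a b c e kk
          using grd_prod[of kk b c e j a] po
          by (cases "g (c, e) = 0") (auto simp: pure_order_def trunc_def)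
        done
    qed
  qed
qed


lemma trunc_I:
  assumes pure: "\<forall>g\<in>G. \<exists>j. pure_order g j" and P: "P \<in> left_ideal s G"
  shows "trunc k P \<in> left_ideal s G"
proof -
  obtain Q where q: "\<forall>g\<in>G. Q g \<in> Dv s" "P = (\<lambda>m. \<Sum>g\<in>G. wmult s (Q g) g m)"
    using P unfolding left_ideal_def by blast
  define J where "J g = (SOME j. pure_order g j)" for g
  have po: "\<And>g. g \<in> G \<Longrightarrow> pure_order g (J g)"
    unfolding J_def using pure by (metis someI_ex)
  have pm: "\<And>g m. g \<in> G \<Longrightarrow> (if k \<le> grd m then wmult s (Q g) g m else 0)
      = wmult s (trunc (k - J g) (Q g)) g m"
  proof -
    fix g m assume g: "g \<in> G"
    have "trunc k (wmult s (Q g) g) = wmult s (trunc (k - J g) (Q g)) g"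
      using trunc_wmult[OF Dv_fin po[OF g], of "Q g" s] q(1) g by simp
    from fun_cong[OF this, of m] show "(if k \<le> grd m then wmult s (Q g) g m else 0)
      = wmult s (trunc (k - J g) (Q g)) g m" by (simp add: trunc_def)
  qed
  have "trunc k P = (\<lambda>m. \<Sum>g\<in>G. wmult s (trunc (k - J g) (Q g)) g m)"
  proof (rule ext)
    fix m
    have "(\<Sum>g\<in>G. wmult s (trunc (k - J g) (Q g)) g m) =
        (\<Sum>g\<in>G. (if k \<le> grd m then wmult s (Q g) g m else 0))"
      using pm by (intro sum.cong) auto
    then show "trunc k P m = (\<Sum>g\<in>G. wmult s (trunc (k - J g) (Q g)) g m)"
      unfolding q(2) trunc_def by (cases "k \<le> grd m") auto
  qed
  moreover have "\<forall>g\<in>G. trunc (k - J g) (Q g) \<in> Dv s" using q(1) trunc_Dv by blast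
  ultimately show ?thesis unfolding left_ideal_def
    by (intro CollectI exI[where x="\<lambda>g. trunc (k - J g) (Q g)"]) simp
qed

theorem lemma2p15:
  fixes s :: nat and G :: "weyl set" and I :: "weyl set" and k p :: int
  assumes "finite G" and "G \<subseteq> Dv s"
    and "\<forall>g\<in>G. \<exists>j. pure_order g j"
    and "I = left_ideal s G"
  shows "mclass s I ` (Vfilt s k \<inter> Ffilt s p) = Vind s I k \<inter> Ford s I p"
proof
  show "mclass s I ` (Vfilt s k \<inter> Ffilt s p) \<subseteq> Vind s I k \<inter> Ford s I p"
    by (auto simp: Vind_def Ford_def)
next
  show "Vind s I k \<inter> Ford s I p \<subseteq> mclass s I ` (Vfilt s k \<inter> Ffilt s p)"
  proof
    fix X assume X: "X \<in> Vind s I k \<inter> Ford s I p"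
    obtain A where A: "A \<in> Vfilt s k" "X = mclass s I A" using X by (auto simp: Vind_def)
    obtain B where B: "B \<in> Ffilt s p" "X = mclass s I B" using X by (auto simp: Ford_def)
    have BD: "B \<in> Dv s" using B(1) by (simp add: Ffilt_def)
    have "B - B = (\<lambda>_. 0)" by (rule ext) simp
    then have "B - B \<in> I" using zero_I assms(4) by simp
    then have "B \<in> mclass s I B" using BD by (simp add: mclass_def)
    then have "B \<in> mclass s I A" using A(2) B(2) by simp
    then have BA: "B - A \<in> I" by (simp add: mclass_def)
    define C where "C = trunc k B"
    have CD: "C \<in> Dv s" unfolding C_def using trunc_Dv[OF BD] .
    have CV: "C \<in> Vfilt s k" using CD by (auto simp: Vfilt_def C_def trunc_def grd_def split: if_splits)
    have CF: "C \<in> Ffilt s p" using CD B(1) by (auto simp: Ffilt_def C_def trunc_def split: if_splits)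
    have tA: "trunc k A = A"
    proof (rule ext)
      fix m :: mono
      obtain g d where m: "m = (g, d)" by fastforce
      show "trunc k A m = A m" using A(1) unfolding m
        by (auto simp: Vfilt_def trunc_def grd_def)
    qed
    have "C - A = trunc k (B - A)"
    proof (rule ext)
      fix m
      have h: "trunc k A m = A m" using tA by simp
      show "(C - A) m = trunc k (B - A) m"
        using h unfolding C_def trunc_def by (cases "k \<le> grd m") auto
    qed
    then have CA: "C - A \<in> I" using trunc_I[OF assms(3)] BA assms(4) by simp
    have "mclass s I C = mclass s I A"
    proof (rule set_eqI)
      fix D
      have e1: "D - A = (D - C) - ((\<lambda>_. 0) - (C - A))" by (rule ext) simp
      have e2: "D - C = (D - A) - (C - A)" by (rule ext) simp
      have "D - C \<in> I \<longleftrightarrow> D - A \<in> I"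
      proof
        assume "D - C \<in> I" then show "D - A \<in> I"
        proof -
          have "(\<lambda>_. 0) - (C - A) \<in> I" using I_diff[OF zero_I, of "C - A" s G] CA assms(4) by simp
          then show ?thesis using e1 I_diff[of "D - C" s G] \<open>D - C \<in> I\<close> assms(4) by simp
        qed
      next
        assume "D - A \<in> I" then show "D - C \<in> I"
          using e2 I_diff[of "D - A" s G "C - A"] CA assms(4) by simp
      qed
      then show "D \<in> mclass s I C \<longleftrightarrow> D \<in> mclass s I A" by (simp add: mclass_def)
    qed
    then show "X \<in> mclass s I ` (Vfilt s k \<inter> Ffilt s p)" using A(2) CV CF by blast
  qed
qed

end
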